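(* Let $S=G_2(q)$, where $q=3^f$ and $f>1$, and let $\phi$ be a field automorphism of $S$ of prime order. Let $r$ be a Zsigmondy prime divisor of $\Phi_2(q)=q+1$, i.e. a prime with the multiplicative order of $3$ modulo $r$ equal to $2f$, and let $R$ be a Sylow $r$-subgroup of $S$. Then $C_{\widehat{A}_0}(R)\le S$.
   Context: $\widehat{A}_0$ denotes the subgroup of $\mathrm{Aut}(S)$ generated by $S$ (identified with $\mathrm{Inn}(S)$) and all field automorphisms of $S$. *)

theory Defs
  imports "HOL-Algebra.Algebra" "HOL-Number_Theory.Number_Theory"
begin

text \<open>Split octonions over a field K, in Zorn vector-matrix form (a, v, w, b),
  with a b in K and v w in K^3.  G_2(q) is the automorphism group of the
  split octonion algebra over GF(q).\<close>

type_synonym 'k vec3 = "'k \<times> 'k \<times> 'k"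
type_synonym 'k oct = "'k \<times> 'k vec3 \<times> 'k vec3 \<times> 'k"

fun v3_add :: "'k::field vec3 \<Rightarrow> 'k vec3 \<Rightarrow> 'k vec3" where
  "v3_add (a1,a2,a3) (b1,b2,b3) = (a1+b1, a2+b2, a3+b3)"

fun v3_smult :: "'k::field \<Rightarrow> 'k vec3 \<Rightarrow> 'k vec3" where
  "v3_smult c (a1,a2,a3) = (c*a1, c*a2, c*a3)"

fun v3_dot :: "'k::field vec3 \<Rightarrow> 'k vec3 \<Rightarrow> 'k" where
  "v3_dot (a1,a2,a3) (b1,b2,b3) = a1*b1 + a2*b2 + a3*b3"

fun v3_cross :: "'k::field vec3 \<Rightarrow> 'k vec3 \<Rightarrow> 'k vec3" where
  "v3_cross (a1,a2,a3) (b1,b2,b3) = (a2*b3 - a3*b2, a3*b1 - a1*b3, a1*b2 - a2*b1)"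

fun v3_map :: "('k \<Rightarrow> 'k) \<Rightarrow> 'k vec3 \<Rightarrow> 'k vec3" where
  "v3_map s (a1,a2,a3) = (s a1, s a2, s a3)"

fun oct_add :: "'k::field oct \<Rightarrow> 'k oct \<Rightarrow> 'k oct" where
  "oct_add (a,v,w,b) (a',v',w',b') = (a+a', v3_add v v', v3_add w w', b+b')"

fun oct_smult :: "'k::field \<Rightarrow> 'k oct \<Rightarrow> 'k oct" where
  "oct_smult c (a,v,w,b) = (c*a, v3_smult c v, v3_smult c w, c*b)"

fun oct_mult :: "'k::field oct \<Rightarrow> 'k oct \<Rightarrow> 'k oct" where
  "oct_mult (a,v,w,b) (a',v',w',b') =
     (a*a' + v3_dot v w',
      v3_add (v3_add (v3_smult a v') (v3_smult b' v)) (v3_smult (-1) (v3_cross w w')),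
      v3_add (v3_add (v3_smult a' w) (v3_smult b w')) (v3_cross v v'),
      v3_dot w v' + b*b')"

definition G2_set :: "('k::field oct \<Rightarrow> 'k oct) set" where
  "G2_set = {g. bij g \<and>
     (\<forall>x y. g (oct_add x y) = oct_add (g x) (g y)) \<and>
     (\<forall>c x. g (oct_smult c x) = oct_smult c (g x)) \<and>
     (\<forall>x y. g (oct_mult x y) = oct_mult (g x) (g y))}"

abbreviation Perm_oct :: "('k::field oct \<Rightarrow> 'k oct) monoid" where
  "Perm_oct \<equiv> BijGroup UNIV"

definition G2 :: "('k::field oct \<Rightarrow> 'k oct) monoid" where
  "G2 = Perm_oct \<lparr>carrier := G2_set\<rparr>"

definition field_aut :: "('k::field \<Rightarrow> 'k) \<Rightarrow> bool" where
  "field_aut s \<longleftrightarrow> bij s \<and> (\<forall>a b. s (a+b) = s a + s b) \<and> (\<forall>a b. s (a*b) = s a * s b)"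

text \<open>Field automorphism of G_2(K) induced by s: conjugation by the
  coordinatewise application of s.\<close>
fun oct_map :: "('k \<Rightarrow> 'k) \<Rightarrow> 'k oct \<Rightarrow> 'k oct" where
  "oct_map s (a,v,w,b) = (s a, v3_map s v, v3_map s w, s b)"

text \<open>A_0-hat: generated by G_2(K) (inner automorphisms) and field automorphisms,
  realised inside the permutation group of the octonions (acting on G_2(K)
  by conjugation; this action is faithful).\<close>
definition A0hat :: "('k::field oct \<Rightarrow> 'k oct) set" where
  "A0hat = generate Perm_oct (G2_set \<union> {oct_map s | s. field_aut s})"

definition centraliser_in :: "('a \<Rightarrow> 'a) set \<Rightarrow> ('a \<Rightarrow> 'a) set \<Rightarrow> ('a \<Rightarrow> 'a) set" where
  "centraliser_in A R = {a \<in> A. \<forall>x \<in> R. a \<circ> x = x \<circ> a}"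

definition sylow_subgroup :: "nat \<Rightarrow> 'a set \<Rightarrow> ('a, 'b) monoid_scheme \<Rightarrow> bool" where
  "sylow_subgroup p P G \<longleftrightarrow> subgroup P G \<and> card P = p ^ multiplicity p (order G)"

end

theory Submission
  imports Defs
begin

definition addG :: "'k::field monoid" where
  "addG = \<lparr>carrier = UNIV, monoid.mult = (+), monoid.one = 0\<rparr>"

lemma group_addG: "group (addG :: 'k::field monoid)"
  apply (rule groupI) apply (auto simp: addG_def add.assoc)
  by (metis add.commute add.right_inverse)

lemma addG_pow: "x [^]\<^bsub>(addG :: 'k::field monoid)\<^esub> n = of_nat n * x"
  by (induction n) (auto simp: addG_def algebra_simps)

lemma char3:
  assumes "card (UNIV :: 'k::{field,finite} set) = 3 ^ f"
  shows "(3::'k) = 0"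
proof -
  interpret group "addG :: 'k monoid" by (rule group_addG)
  have "(1::'k) [^]\<^bsub>addG\<^esub> order (addG::'k monoid) = \<one>\<^bsub>addG\<^esub>"
    by (rule pow_order_eq_1) (simp add: addG_def)
  hence "of_nat (order (addG::'k monoid)) * (1::'k) = 0"
    by (simp only: addG_pow) (simp add: addG_def)
  hence "of_nat (3 ^ f) * (1::'k) = 0" using assms
    by (simp add: order_def addG_def)
  hence "(3::'k) ^ f = 0" by simp
  thus ?thesis using power_eq_0_iff by blast
qed

lemma card_subgroup_dvd:
  fixes F :: "'k::{field,finite} set"
  assumes "0 \<in> F" "\<And>x y. x \<in> F \<Longrightarrow> y \<in> F \<Longrightarrow> x + y \<in> F" "\<And>x. x \<in> F \<Longrightarrow> - x \<in> F"
  shows "card F dvd card (UNIV :: 'k set)"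
proof -
  interpret group "addG :: 'k monoid" by (rule group_addG)
  have inv: "inv\<^bsub>addG\<^esub> x = - x" for x :: 'k
    by (rule inv_equality) (auto simp: addG_def)
  have "subgroup F (addG :: 'k monoid)"
  proof (rule subgroupI)
    show "F \<subseteq> carrier addG" by (simp add: addG_def)
    show "F \<noteq> {}" using assms(1) by blast
    show "inv\<^bsub>addG\<^esub> a \<in> F" if "a \<in> F" for a using that by (simp only: inv assms)
    show "a \<otimes>\<^bsub>addG\<^esub> b \<in> F" if "a \<in> F" "b \<in> F" for a b using that by (simp add: addG_def assms)
  qed
  from lagrange[OF this] show ?thesis by (metis dvd_triv_right order_def addG_def partial_object.select_convs(1))
qed

definition mulG :: "'k::field set \<Rightarrow> 'k monoid" where
  "mulG F = \<lparr>carrier = F - {0}, monoid.mult = (*), monoid.one = 1\<rparr>"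

lemma mulG_pow: "x [^]\<^bsub>mulG F\<^esub> n = x ^ n"
  by (induction n) (auto simp: mulG_def algebra_simps)

lemma mulG_fermat:
  fixes F :: "'k::{field,finite} set"
  assumes "1 \<in> F" "\<And>x y. x \<in> F \<Longrightarrow> y \<in> F \<Longrightarrow> x * y \<in> F" "\<And>x. x \<in> F \<Longrightarrow> inverse x \<in> F"
    and "x \<in> F" "x \<noteq> 0" "0 \<in> F"
  shows "x ^ (card F - 1) = 1"
proof -
  have g: "group (mulG F)"
    apply (rule groupI) apply (auto simp: mulG_def assms mult.assoc)
    subgoal for y apply (rule bexI[of _ "inverse y"]) using assms(3) by auto
    done
  interpret group "mulG F" by (rule g)
  have "x [^]\<^bsub>mulG F\<^esub> order (mulG F) = \<one>\<^bsub>mulG F\<^esub>"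
    by (rule pow_order_eq_1) (simp add: mulG_def assms)
  moreover have "order (mulG F) = card F - 1"
    using assms by (simp add: order_def mulG_def card_Diff_singleton_if)
  ultimately have "x [^]\<^bsub>mulG F\<^esub> (card F - 1) = 1" by (simp add: mulG_def)
  thus ?thesis by (simp only: mulG_pow)
qed

type_synonym 'k m2 = "'k \<times> 'k \<times> 'k \<times> 'k"

fun mm :: "'k::field m2 \<Rightarrow> 'k m2 \<Rightarrow> 'k m2" where
  "mm (a,b,c,d) (e,f,g,h) = (a * e+b * g, a * f+b * h, c * e+d * g, c * f+d * h)"

definition mI :: "'k::field m2" where "mI = (1,0,0,1)"

fun mpow :: "'k::field m2 \<Rightarrow> nat \<Rightarrow> 'k m2" where
  "mpow M 0 = mI"
| "mpow M (Suc n) = mm (mpow M n) M"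

fun mdet :: "'k::field m2 \<Rightarrow> 'k" where "mdet (a,b,c,d) = a * d - b * c"
fun mtr :: "'k::field m2 \<Rightarrow> 'k" where "mtr (a,b,c,d) = a + d"
fun mlin :: "'k::field \<Rightarrow> 'k \<Rightarrow> 'k m2 \<Rightarrow> 'k m2" where
  "mlin x y (a,b,c,d) = (x + y * a, y * b, y * c, x + y * d)"
fun minv :: "'k::field m2 \<Rightarrow> 'k m2" where "minv (a,b,c,d) = (d, -b, -c, a)"

lemma mm_assoc: "mm (mm A B) C = mm A (mm B C)"
  by (cases A; cases B; cases C) (simp add: algebra_simps)

lemma mm_I1[simp]: "mm mI A = A" and mm_I2[simp]: "mm A mI = A"
  by (cases A; simp add: mI_def)+

lemma mpow_add: "mpow M (m + n) = mm (mpow M m) (mpow M n)"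
  by (induction n) (simp_all add: mm_assoc)

lemma mpow_mult: "mpow M (m * n) = mpow (mpow M m) n"
proof (induction n)
  case (Suc n)
  have "mpow M (m * Suc n) = mpow M (m * n + m)" by (simp add: algebra_simps)
  thus ?case using Suc by (simp add: mpow_add)
qed simp

lemma mdet_mm: "mdet (mm A B) = mdet A * mdet B"
  by (cases A; cases B) (simp add: algebra_simps)

lemma mdet_mpow: "mdet (mpow M n) = mdet M ^ n"
  by (induction n) (simp_all add: mdet_mm mI_def)

lemma mm_minv: "mdet M = 1 \<Longrightarrow> mm M (minv M) = mI"
  by (cases M) (simp add: mI_def algebra_simps)

lemma mpow_span:
  assumes "mdet M = 1"
  shows "\<exists>x y. mpow M n = mlin x y M"
proof (induction n)
  case 0
  show ?case by (rule exI[of _ 1], rule exI[of _ 0]) (cases M, simp add: mI_def)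
next
  case (Suc n)
  then obtain x y where e: "mpow M n = mlin x y M" by blast
  show ?case
    apply (rule exI[of _ "- y"], rule exI[of _ "x + y * mtr M"])
    using assms e apply (cases M) apply (simp add: algebra_simps)
    by (metis (no_types, lifting) distrib_right mult.assoc mult_1)
qed

lemma tr_cube:
  assumes "mdet M = 1" "(3::'k::field) = 0"
  shows "mtr (mpow (M::'k m2) 3) = mtr M ^ 3"
proof -
  obtain a b c d where M: "M = (a,b,c,d)" by (cases M)
  have "mpow M 3 = mm (mm M M) M" by (simp add: numeral_3_eq_3)
  hence "mtr (mpow M 3) = a * (a * a+b * c) + b * (c * a+d * c) + c * (a * b+b * d) + d * (c * b+d * d)"
    by (simp add: M algebra_simps)
  also have "\<dots> = (a+d)^3 - 3 * (a+d) * (a * d-b * c)"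
    by (simp add: algebra_simps power3_eq_cube)
  finally show ?thesis using assms by (simp add: M)
qed

lemma tr_pow3:
  assumes "mdet M = 1" "(3::'k::field) = 0"
  shows "mtr (mpow (M::'k m2) (3^j)) = mtr M ^ (3^j)"
proof (induction j)
  case 0
  then show ?case by (cases M) (simp add: mI_def)
next
  case (Suc j)
  have "mpow M (3 ^ Suc j) = mpow (mpow M (3^j)) 3" by (simp add: mpow_mult[symmetric] mult.commute)
  hence "mtr (mpow M (3 ^ Suc j)) = mtr (mpow M (3^j)) ^ 3"
    using tr_cube[of "mpow M (3^j)"] assms by (simp add: mdet_mpow)
  thus ?case using Suc by (simp add: power_mult[symmetric] mult.commute)
qed

lemma same_trace:
  fixes M :: "'k::field m2"
  assumes "mdet M = 1" "mdet N = 1" "N = mlin x y M" "mtr N = mtr M"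
    and "(mtr M)^2 \<noteq> 4" "(2::'k) \<noteq> 0"
  shows "N = M \<or> N = minv M"
proof -
  obtain a b c d where M: "M = (a,b,c,d)" by (cases M)
  define t where "t = a + d"
  have tr: "2 * x + y * t = t" using assms(3,4) by (simp add: M t_def algebra_simps)
  have det: "x * x + x * y * t + y * y * (a * d-b * c) = 1" using assms(2,3) by (simp add: M t_def algebra_simps)
  have dM: "a * d - b * c = 1" using assms(1) by (simp add: M)
  have x2: "2 * x = t * (1-y)" using tr by (simp add: algebra_simps)
  have "4 * (x * x + x * y * t + y * y) = 4" using det dM by simp
  hence "(2 * x) * (2 * x) + 2 * (2 * x) * y * t + 4 * y * y = 4" by (simp add: algebra_simps)
  hence "t * (1-y) * (t * (1-y)) + 2 * (t * (1-y)) * y * t + 4 * y * y = 4" by (simp only: x2)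
  hence "(1 - y * y) * (t * t - 4) = 0" by (simp add: algebra_simps)
  moreover have "t * t - 4 \<noteq> 0" using assms(5) by (simp add: M t_def power2_eq_square)
  ultimately have "y * y = 1" by simp
  hence "y = 1 \<or> y = -1" by (metis square_eq_1_iff)
  thus ?thesis
  proof
    assume "y = 1"
    hence "x = 0" using x2 assms(6) by simp
    thus ?thesis using \<open>y = 1\<close> assms(3) by (simp add: M)
  next
    assume "y = -1"
    hence "2 * x = 2 * t" using x2 by simp
    hence "x = t" using assms(6) by simp
    thus ?thesis using \<open>y = -1\<close> assms(3) by (simp add: M t_def)
  qed
qed

lemma pow_gcd_one:
  fixes x :: "'a::monoid_mult"
  assumes "x ^ m = 1" "x ^ n = 1"
  shows "x ^ gcd m n = 1"
proof (cases "m = 0")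
  case True thus ?thesis using assms by simp
next
  case False
  then obtain u v where e: "m * u = n * v + gcd m n" using bezout_nat by blast
  have "1 = x ^ (m * u)" using assms by (simp add: power_mult)
  also have "\<dots> = x ^ (n * v) * x ^ gcd m n" by (simp add: e power_add)
  also have "\<dots> = x ^ gcd m n" using assms by (simp add: power_mult)
  finally show ?thesis by simp
qed

lemma mpow_I[simp]: "mpow mI n = mI"
  by (induction n) auto

lemma mpow_gcd_one:
  assumes "mpow M m = mI" "mpow M n = mI"
  shows "mpow M (gcd m n) = mI"
proof (cases "m = 0")
  case True thus ?thesis using assms by simp
next
  case False
  then obtain u v where e: "m * u = n * v + gcd m n" using bezout_nat by blast
  have "mI = mpow M (m * u)" using assms by (simp add: mpow_mult)
  also have "\<dots> = mm (mpow M (n * v)) (mpow M (gcd m n))" by (simp add: e mpow_add)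
  also have "\<dots> = mpow M (gcd m n)" using assms by (simp add: mpow_mult)
  finally show ?thesis by simp
qed

lemma nonsquare_exists:
  assumes "(2::'k::{field,finite}) \<noteq> 0"
  shows "\<exists>d::'k. \<forall>x. x * x \<noteq> d"
proof (rule ccontr)
  assume "\<not> ?thesis"
  hence "surj (\<lambda>x::'k. x * x)" by (auto simp: surj_def) (metis)
  hence "inj (\<lambda>x::'k. x * x)" by (rule finite_UNIV_surj_inj[rotated]) simp
  moreover have "(1::'k) * 1 = (-1) * (-1)" by simp
  ultimately have "(1::'k) = -1" by (meson injD)
  hence "(2::'k) = 0" by (metis add_eq_0_iff one_add_one)
  thus False using assms by simp
qed

definition Lg :: "'k::field \<Rightarrow> ('k \<times> 'k) monoid" where
  "Lg d = \<lparr>carrier = UNIV - {(0,0)},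
     monoid.mult = (\<lambda>(a,b) (c,e). (a * c + d * b * e, a * e + b * c)), monoid.one = (1,0)\<rparr>"

fun nrm :: "'k::field \<Rightarrow> 'k \<times> 'k \<Rightarrow> 'k" where "nrm d (a,b) = a * a - d * b * b"

lemma nrm_nz:
  assumes "\<forall>x. x * x \<noteq> d" "(a,b) \<noteq> (0,0)"
  shows "nrm d (a,b) \<noteq> 0"
proof
  assume h: "nrm d (a,b) = 0"
  show False
  proof (cases "b = 0")
    case True thus False using h assms by simp
  next
    case False
    have "(a / b) * (a / b) = d" using h False by (simp add: field_simps)
    thus False using assms by blast
  qed
qed

lemma nrm_mult: "nrm d (a * c + d * b * e, a * e + b * c) = nrm d (a,b) * nrm d (c,e)"
  by (simp add: algebra_simps)

lemma lg_assoc: "((a::'k::field) * c + d * b * e) * g + d * (a * e + b * c) * h = a * (c * g + d * e * h) + d * b * (c * h + e * g)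
  \<and> (a * c + d * b * e) * h + (a * e + b * c) * g = a * (c * h + e * g) + b * (c * g + d * e * h)"
  by (simp add: algebra_simps)

lemma group_Lg:
  assumes "\<forall>x. x * x \<noteq> (d::'k::field)"
  shows "group (Lg d)"
proof (rule groupI)
  fix x y assume "x \<in> carrier (Lg d)" "y \<in> carrier (Lg d)"
  moreover obtain a b c e where xy0: "x = (a,b)" "y = (c,e)" by (cases x, cases y)
  ultimately have xy: "x = (a,b)" "y = (c,e)" "(a,b) \<noteq> (0,0)" "(c,e) \<noteq> (0,0)"
    by (auto simp: Lg_def)
  have "nrm d (a * c + d * b * e, a * e + b * c) \<noteq> 0"
    using nrm_mult[of d a c b e] nrm_nz[OF assms xy(3)] nrm_nz[OF assms xy(4)] by simp
  hence "(a * c + d * b * e, a * e + b * c) \<noteq> (0,0)" by auto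
  thus "x \<otimes>\<^bsub>Lg d\<^esub> y \<in> carrier (Lg d)" by (simp add: Lg_def xy)
next
  show "\<one>\<^bsub>Lg d\<^esub> \<in> carrier (Lg d)" by (simp add: Lg_def)
next
  fix x y z assume "x \<in> carrier (Lg d)" "y \<in> carrier (Lg d)" "z \<in> carrier (Lg d)"
  thus "x \<otimes>\<^bsub>Lg d\<^esub> y \<otimes>\<^bsub>Lg d\<^esub> z = x \<otimes>\<^bsub>Lg d\<^esub> (y \<otimes>\<^bsub>Lg d\<^esub> z)"
    by (cases x; cases y; cases z) (simp add: Lg_def lg_assoc)
next
  fix x assume "x \<in> carrier (Lg d)"
  thus "\<one>\<^bsub>Lg d\<^esub> \<otimes>\<^bsub>Lg d\<^esub> x = x" by (cases x) (simp add: Lg_def)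
next
  fix x assume "x \<in> carrier (Lg d)"
  moreover obtain a b where "x = (a,b)" by (cases x)
  ultimately have x: "x = (a,b)" "(a,b) \<noteq> (0,0)" by (auto simp: Lg_def)
  define n where "n = nrm d (a,b)"
  have n: "n \<noteq> 0" using nrm_nz[OF assms x(2)] n_def by simp
  show "\<exists>y\<in>carrier (Lg d). y \<otimes>\<^bsub>Lg d\<^esub> x = \<one>\<^bsub>Lg d\<^esub>"
  proof (rule bexI[of _ "(a / n, - b / n)"])
    have e1: "a / n * a + d * (- b / n) * b = (a * a - d * b * b) / n" by (simp add: divide_inverse algebra_simps)
    have e2: "a / n * b + - b / n * a = 0" by (simp add: divide_inverse algebra_simps)
    have "(a * a - d * b * b) / n = 1" using n by (simp add: n_def)
    thus "(a / n, - b / n) \<otimes>\<^bsub>Lg d\<^esub> x = \<one>\<^bsub>Lg d\<^esub>" using e1 e2 x by (simp add: Lg_def)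
    show "(a / n, - b / n) \<in> carrier (Lg d)" using n x(2) by (auto simp: Lg_def)
  qed
qed

fun emb :: "'k::field \<Rightarrow> 'k \<times> 'k \<Rightarrow> 'k m2" where "emb d (a,b) = (a, d * b, b, a)"

lemma emb_mult: "emb d (x \<otimes>\<^bsub>Lg d\<^esub> y) = mm (emb d x) (emb d y)"
  by (cases x; cases y) (simp add: Lg_def algebra_simps)

lemma emb_pow: "emb d (x [^]\<^bsub>Lg d\<^esub> (n::nat)) = mpow (emb d x) n"
  by (induction n) (simp_all add: emb_mult, simp add: Lg_def mI_def)

lemma exists_M:
  fixes K_witness :: "'k::{field,finite} itself"
  assumes "card (UNIV :: 'k set) = q" "Factorial_Ring.prime r" "r dvd q * q - 1" "coprime r (q - 1)"
    and "(2::'k) \<noteq> 0"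
  shows "\<exists>M::'k m2. mdet M = 1 \<and> mpow M r = mI \<and> M \<noteq> mI"
proof -
  obtain d :: 'k where d: "\<forall>x. x * x \<noteq> d" using nonsquare_exists[OF assms(5)] by blast
  interpret G: group "Lg d" by (rule group_Lg[OF d])
  have q1: "q \<ge> 2"
  proof -
    have "card {0::'k, 1} \<le> card (UNIV::'k set)" by (rule card_mono) simp_all
    thus ?thesis using assms(1) by simp
  qed
  have fin: "finite (carrier (Lg d))" by simp
  have ord: "order (Lg d) = q * q - 1"
  proof -
    have "card (UNIV - {(0::'k,0::'k)}) = card (UNIV :: ('k\<times>'k) set) - 1"
      by (simp add: card_Diff_singleton)
    also have "\<dots> = q * q - 1" using assms(1) by (simp add: UNIV_Times_UNIV[symmetric] card_cartesian_product del: UNIV_Times_UNIV)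
    finally show ?thesis by (simp add: order_def Lg_def)
  qed
  define a where "a = multiplicity r (q * q - 1)"
  define m where "m = (q * q - 1) div r ^ a"
  have "q * q \<ge> 2 * 2" using mult_le_mono[OF q1 q1] .
  hence qq: "q * q - 1 > 0" by linarith
  have a1: "a \<ge> 1" unfolding a_def using assms(2,3) qq
    using prime_multiplicity_gt_zero_iff[of r "q * q - 1"] by (simp add: prime_imp_prime_elem)
  have "r ^ a dvd q * q - 1" unfolding a_def by (rule multiplicity_dvd)
  hence om: "order (Lg d) = r ^ a * m" unfolding m_def ord by simp
  have "sylow (Lg d) r a m"
    unfolding sylow_def sylow_axioms_def using G.is_group assms(2) om fin by blast
  then obtain H where H: "subgroup H (Lg d)" "card H = r ^ a" using sylow.sylow_thm by blast
  interpret H: group "(Lg d)\<lparr>carrier := H\<rparr>" using H(1) G.is_group subgroup.subgroup_is_group by blast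
  have r2: "r \<ge> 2" using assms(2) prime_ge_2_nat by blast
  have "r ^ 1 \<le> r ^ a" using a1 r2 by (intro power_increasing) simp_all
  hence cH: "card H \<ge> 2" using H(2) r2 by simp
  have "\<exists>h \<in> H. h \<noteq> \<one>\<^bsub>Lg d\<^esub>"
  proof (rule ccontr)
    assume "\<not> ?thesis"
    hence "H \<subseteq> {\<one>\<^bsub>Lg d\<^esub>}" by blast
    hence "card H \<le> card {\<one>\<^bsub>Lg d\<^esub>}" by (intro card_mono) simp_all
    thus False using cH by simp
  qed
  then obtain h where h: "h \<in> H" "h \<noteq> \<one>\<^bsub>Lg d\<^esub>" by blast
  have hc: "h \<in> carrier (Lg d)" using h H(1) subgroup.subset by blast
  have "h [^]\<^bsub>(Lg d)\<lparr>carrier := H\<rparr>\<^esub> order ((Lg d)\<lparr>carrier := H\<rparr>) = \<one>\<^bsub>(Lg d)\<lparr>carrier := H\<rparr>\<^esub>"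
    by (rule H.pow_order_eq_1) (simp add: h)
  hence hp: "h [^]\<^bsub>Lg d\<^esub> (r ^ a) = \<one>\<^bsub>Lg d\<^esub>"
    using H(2) G.nat_pow_consistent by (simp add: order_def)
  define j where "j = (LEAST j. h [^]\<^bsub>Lg d\<^esub> (r ^ j) = \<one>\<^bsub>Lg d\<^esub>)"
  have j1: "h [^]\<^bsub>Lg d\<^esub> (r ^ j) = \<one>\<^bsub>Lg d\<^esub>" unfolding j_def by (rule LeastI[of _ a]) (rule hp)
  have j0: "j \<noteq> 0"
  proof
    assume "j = 0"
    hence "h [^]\<^bsub>Lg d\<^esub> (1::nat) = \<one>\<^bsub>Lg d\<^esub>" using j1 by simp
    thus False using h(2) hc by simp
  qed
  have j2: "h [^]\<^bsub>Lg d\<^esub> (r ^ (j - 1)) \<noteq> \<one>\<^bsub>Lg d\<^esub>"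
  proof
    assume "h [^]\<^bsub>Lg d\<^esub> (r ^ (j - 1)) = \<one>\<^bsub>Lg d\<^esub>"
    hence "j \<le> j - 1" unfolding j_def by (rule Least_le)
    thus False using j0 by simp
  qed
  define z where "z = h [^]\<^bsub>Lg d\<^esub> (r ^ (j - 1))"
  have zc: "z \<in> carrier (Lg d)" unfolding z_def using hc by simp
  have zr: "z [^]\<^bsub>Lg d\<^esub> r = \<one>\<^bsub>Lg d\<^esub>"
  proof -
    have "r ^ (j - 1) * r = r ^ j" using j0 by (metis Suc_pred' gr0I power_Suc2)
    thus ?thesis unfolding z_def using G.nat_pow_pow[OF hc] j1 by simp
  qed
  define M where "M = emb d z"
  have "emb d (z [^]\<^bsub>Lg d\<^esub> r) = emb d (\<one>\<^bsub>Lg d\<^esub>)" using zr by simp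
  hence Mr: "mpow M r = mI" unfolding M_def emb_pow by (simp add: Lg_def mI_def)
  have MI: "M \<noteq> mI"
  proof
    assume "M = mI"
    hence "z = (1,0)" unfolding M_def by (cases z) (simp add: mI_def)
    thus False using j2 z_def by (simp add: Lg_def)
  qed
  obtain za zb where zab: "z = (za, zb)" by (cases z)
  have det0: "mdet M \<noteq> 0" using nrm_nz[OF d] zc zab by (simp add: M_def Lg_def)
  have detr: "mdet M ^ r = 1" using arg_cong[OF Mr, of mdet] by (simp add: mdet_mpow mI_def)
  have detq: "mdet M ^ (card (UNIV::'k set) - 1) = 1"
    by (rule mulG_fermat) (auto simp: det0)
  have "mdet M ^ gcd r (q - 1) = 1" by (rule pow_gcd_one) (use detr detq assms(1) in auto)
  hence "mdet M = 1" using assms(4) by simp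
  thus ?thesis using Mr MI by blast
qed

definition semi :: "('k::field \<Rightarrow> 'k) \<Rightarrow> ('k oct \<Rightarrow> 'k oct) \<Rightarrow> bool" where
  "semi s g \<longleftrightarrow> bij g \<and> (\<forall>x y. g (oct_add x y) = oct_add (g x) (g y)) \<and>
     (\<forall>c x. g (oct_smult c x) = oct_smult (s c) (g x)) \<and>
     (\<forall>x y. g (oct_mult x y) = oct_mult (g x) (g y))"

lemma semiI:
  assumes "bij g" "\<And>x y. g (oct_add x y) = oct_add (g x) (g y)"
    "\<And>c x. g (oct_smult c x) = oct_smult (s c) (g x)"
    "\<And>x y. g (oct_mult x y) = oct_mult (g x) (g y)"
  shows "semi s g"
  unfolding semi_def using assms by blast

lemma semiD:
  assumes "semi s g"
  shows "bij g" "g (oct_add x y) = oct_add (g x) (g y)"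
    "g (oct_smult c x) = oct_smult (s c) (g x)"
    "g (oct_mult x y) = oct_mult (g x) (g y)"
  using assms unfolding semi_def by blast+

lemma G2_set_semi: "G2_set = {g. semi id g}"
  by (auto simp: G2_set_def semi_def)

lemma semi_comp: "semi s f \<Longrightarrow> semi t g \<Longrightarrow> semi (s \<circ> t) (f \<circ> g)"
  by (rule semiI) (simp_all add: semiD bij_comp)

lemma semi_inv:
  assumes "semi s f" "bij s"
  shows "semi (inv_into UNIV s) (inv_into UNIV f)"
proof -
  have b: "bij f" using assms by (simp add: semiD)
  have fi: "f (inv_into UNIV f x) = x" for x using b by (simp add: bij_is_surj surj_f_inv_f)
  have if1: "inv_into UNIV f (f x) = x" for x using b by (simp add: bij_is_inj inv_f_f)
  have si: "s (inv_into UNIV s x) = x" for x using assms(2) by (simp add: bij_is_surj surj_f_inv_f)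
  have "inv_into UNIV f (oct_add x y) = oct_add (inv_into UNIV f x) (inv_into UNIV f y)" for x y
  proof -
    have "f (oct_add (inv_into UNIV f x) (inv_into UNIV f y)) = oct_add x y" using assms(1) by (simp add: semiD fi)
    thus ?thesis by (metis if1)
  qed
  moreover have "inv_into UNIV f (oct_smult c x) = oct_smult (inv_into UNIV s c) (inv_into UNIV f x)" for c x
  proof -
    have "f (oct_smult (inv_into UNIV s c) (inv_into UNIV f x)) = oct_smult c x" using assms(1) by (simp add: semiD fi si)
    thus ?thesis by (metis if1)
  qed
  moreover have "inv_into UNIV f (oct_mult x y) = oct_mult (inv_into UNIV f x) (inv_into UNIV f y)" for x y
  proof -
    have "f (oct_mult (inv_into UNIV f x) (inv_into UNIV f y)) = oct_mult x y" using assms(1) by (simp add: semiD fi)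
    thus ?thesis by (metis if1)
  qed
  ultimately show ?thesis using b by (intro semiI) (simp_all add: bij_imp_bij_inv)
qed

lemma field_aut_basic:
  assumes "field_aut s"
  shows "s 0 = 0" "s 1 = 1" "s (- x) = - s x" "s (x - y) = s x - s y"
proof -
  have add: "s (a + b) = s a + s b" for a b using assms by (simp add: field_aut_def)
  have mul: "s (a * b) = s a * s b" for a b using assms by (simp add: field_aut_def)
  have inj: "inj s" using assms by (simp add: field_aut_def bij_is_inj)
  have "s 0 = s 0 + s 0" using add[of 0 0] by simp
  thus s0: "s 0 = 0" by (simp only: add_cancel_right_right)
  have m1: "s 1 * s 1 = s 1" using mul[of 1 1] by simp
  have n1: "s 1 \<noteq> 0"
  proof
    assume "s 1 = 0"
    hence "s 1 = s 0" using s0 by simp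
    hence "(1::'a) = 0" using inj by (simp add: inj_eq)
    thus False by simp
  qed
  from m1 n1 show "s 1 = 1" by (simp add: mult_cancel_right2)
  have sn: "s (- z) = - s z" for z
  proof -
    have "s z + s (- z) = 0" using add[of z "- z"] s0 by simp
    thus ?thesis by (simp add: eq_neg_iff_add_eq_0 add.commute)
  qed
  show "s (- x) = - s x" by (rule sn)
  show "s (x - y) = s x - s y" using add[of x "- y"] sn[of y] by simp
qed

lemma field_aut_comp: "field_aut s \<Longrightarrow> field_aut t \<Longrightarrow> field_aut (s \<circ> t)"
  by (auto simp: field_aut_def bij_comp)

lemma field_aut_inv:
  assumes "field_aut s" shows "field_aut (inv_into UNIV s)"
proof -
  have b: "bij s" using assms by (simp add: field_aut_def)
  have si: "s (inv_into UNIV s x) = x" for x using b by (simp add: bij_is_surj surj_f_inv_f)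
  have is1: "inv_into UNIV s (s x) = x" for x using b by (simp add: bij_is_inj inv_f_f)
  have add: "s (a + b) = s a + s b" for a b using assms by (simp add: field_aut_def)
  have mul: "s (a * b) = s a * s b" for a b using assms by (simp add: field_aut_def)
  have "inv_into UNIV s (a + b) = inv_into UNIV s a + inv_into UNIV s b" for a b
  proof -
    have "a + b = s (inv_into UNIV s a + inv_into UNIV s b)" by (simp add: add si)
    thus ?thesis by (simp add: is1)
  qed
  moreover have "inv_into UNIV s (a * b) = inv_into UNIV s a * inv_into UNIV s b" for a b
  proof -
    have "a * b = s (inv_into UNIV s a * inv_into UNIV s b)" by (simp add: mul si)
    thus ?thesis by (simp add: is1)
  qed
  ultimately show ?thesis using b by (simp add: field_aut_def bij_imp_bij_inv)
qed

lemma field_aut_id: "field_aut id"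
  by (simp add: field_aut_def)

lemma v3_map_comp: "v3_map s (v3_map t v) = v3_map (s \<circ> t) v"
  by (cases v) simp

lemma oct_map_comp: "oct_map s \<circ> oct_map t = oct_map (s \<circ> t)"
proof
  fix x :: "'a oct" show "(oct_map s \<circ> oct_map t) x = oct_map (s \<circ> t) x"
    by (cases x) (simp add: v3_map_comp)
qed

lemma v3_map_id: "v3_map id v = v" by (cases v) simp

lemma oct_map_id: "oct_map id = id"
proof
  fix x :: "'a oct" show "oct_map id x = id x"
    by (cases x) (simp add: v3_map_id)
qed

lemma oct_cases:
  obtains a v1 v2 v3 w1 w2 w3 b where "x = (a, (v1, v2, v3), (w1, w2, w3), b)"
  by (cases x) auto

lemma semi_oct_map:
  assumes "field_aut s"
  shows "semi s (oct_map s)"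
proof -
  note fb = field_aut_basic[OF assms]
  have add: "s (a + b) = s a + s b" for a b using assms by (simp add: field_aut_def)
  have mul: "s (a * b) = s a * s b" for a b using assms by (simp add: field_aut_def)
  have b: "bij s" using assms by (simp add: field_aut_def)
  have "s \<circ> inv_into UNIV s = id" using b bij_is_surj surj_iff by blast
  moreover have "inv_into UNIV s \<circ> s = id" using b bij_is_inj inj_iff by blast
  ultimately have "oct_map s \<circ> oct_map (inv_into UNIV s) = id" "oct_map (inv_into UNIV s) \<circ> oct_map s = id"
    by (simp_all add: oct_map_comp oct_map_id)
  hence bij: "bij (oct_map s)" using o_bij by blast
  have "oct_map s (oct_add x y) = oct_add (oct_map s x) (oct_map s y)" for x y
    by (cases x rule: oct_cases; cases y rule: oct_cases) (simp add: add)
  moreover have "oct_map s (oct_smult c x) = oct_smult (s c) (oct_map s x)" for c x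
    by (cases x rule: oct_cases) (simp add: mul)
  moreover have "oct_map s (oct_mult x y) = oct_mult (oct_map s x) (oct_map s y)" for x y
    by (cases x rule: oct_cases; cases y rule: oct_cases) (simp add: add mul fb)
  ultimately show ?thesis using bij by (intro semiI) simp_all
qed

lemma Bij_UNIV: "Bij UNIV = {f. bij f}"
  by (auto simp: Bij_def)

lemma Perm_mult: "bij f \<Longrightarrow> bij g \<Longrightarrow> f \<otimes>\<^bsub>Perm_oct\<^esub> g = f \<circ> g"
  by (auto simp: BijGroup_def Bij_UNIV compose_def)

lemma Perm_one: "\<one>\<^bsub>Perm_oct\<^esub> = id"
  by (auto simp: BijGroup_def)

lemma Perm_inv: "bij f \<Longrightarrow> inv\<^bsub>Perm_oct\<^esub> f = inv_into UNIV f"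
  by (simp add: inv_BijGroup Bij_UNIV restrict_UNIV)

lemma A0hat_semi:
  assumes "a \<in> (A0hat :: ('k::field oct \<Rightarrow> 'k oct) set)"
  shows "\<exists>s. field_aut s \<and> semi s a"
  using assms unfolding A0hat_def
proof (induction rule: generate.induct)
  case one
  have "semi id (id :: 'k oct \<Rightarrow> 'k oct)" by (rule semiI) simp_all
  moreover have "\<one>\<^bsub>Perm_oct\<^esub> = (id :: 'k oct \<Rightarrow> 'k oct)" by (rule Perm_one)
  ultimately show ?case using field_aut_id by metis
next
  case (incl h)
  thus ?case using field_aut_id semi_oct_map by (auto simp: G2_set_semi)
next
  case (inv h)
  then obtain s where s: "field_aut s" "semi s h"
    using field_aut_id semi_oct_map by (auto simp: G2_set_semi)
  have "bij h" using s by (simp add: semiD)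
  thus ?case using s semi_inv[of s h] field_aut_inv[of s] by (auto simp: Perm_inv field_aut_def)
next
  case (eng h1 h2)
  then obtain s t where st: "field_aut s" "semi s h1" "field_aut t" "semi t h2" by blast
  have "bij h1" "bij h2" using st by (simp_all add: semiD)
  hence eq: "h1 \<otimes>\<^bsub>Perm_oct\<^esub> h2 = h1 \<circ> h2" by (rule Perm_mult)
  have "semi (s \<circ> t) (h1 \<otimes>\<^bsub>Perm_oct\<^esub> h2)" unfolding eq by (rule semi_comp[OF st(2) st(4)])
  thus ?case using field_aut_comp[OF st(1) st(3)] by blast
qed

lemma subgroup_G2: "subgroup (G2_set :: ('k::field oct \<Rightarrow> 'k oct) set) Perm_oct"
proof (rule subgroup.intro)
  show "G2_set \<subseteq> carrier (Perm_oct :: ('k oct \<Rightarrow> 'k oct) monoid)"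
    by (auto simp: BijGroup_def Bij_UNIV G2_set_semi semiD)
  fix x y :: "'k oct \<Rightarrow> 'k oct"
  assume x: "x \<in> G2_set"
  have bx: "bij x" using x by (simp add: G2_set_semi semiD)
  show "inv\<^bsub>Perm_oct\<^esub> x \<in> G2_set"
    using semi_inv[of id x] x bx by (simp add: Perm_inv G2_set_semi inv_id)
  assume y: "y \<in> G2_set"
  have "bij y" using y by (simp add: G2_set_semi semiD)
  thus "x \<otimes>\<^bsub>Perm_oct\<^esub> y \<in> G2_set" using semi_comp[of id x id y] x y bx
    by (simp add: Perm_mult G2_set_semi)
next
  show "\<one>\<^bsub>Perm_oct\<^esub> \<in> (G2_set :: ('k oct \<Rightarrow> 'k oct) set)"
  proof -
    have "semi id (id :: 'k oct \<Rightarrow> 'k oct)" by (rule semiI) simp_all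
    thus ?thesis by (simp add: Perm_one G2_set_semi)
  qed
qed

lemma group_G2: "group (G2 :: ('k::field oct \<Rightarrow> 'k oct) monoid)"
  unfolding G2_def using subgroup.subgroup_is_group[OF subgroup_G2 group_BijGroup] .

lemma G2_carrier: "carrier G2 = G2_set" by (simp add: G2_def)
lemma G2_mult: "f \<in> G2_set \<Longrightarrow> g \<in> G2_set \<Longrightarrow> f \<otimes>\<^bsub>G2\<^esub> g = f \<circ> g"
  by (simp add: G2_def Perm_mult G2_set_semi semiD)
lemma G2_one: "\<one>\<^bsub>G2\<^esub> = id" by (simp add: G2_def Perm_one)
lemma G2_inv: "f \<in> G2_set \<Longrightarrow> inv\<^bsub>G2\<^esub> f = inv_into UNIV f"
proof -
  assume f: "f \<in> G2_set"
  have "inv\<^bsub>G2\<^esub> f = inv\<^bsub>Perm_oct\<^esub> f"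
    unfolding G2_def by (rule group.m_inv_consistent[OF group_BijGroup subgroup_G2 f])
  thus ?thesis using f by (simp add: Perm_inv G2_set_semi semiD)
qed

fun vA :: "'k::field m2 \<Rightarrow> 'k vec3 \<Rightarrow> 'k vec3" where
  "vA (m11, m12, m21, m22) (v1, v2, v3) = (m11 * v1 + m12 * v2, m21 * v1 + m22 * v2, v3)"
fun vB :: "'k::field m2 \<Rightarrow> 'k vec3 \<Rightarrow> 'k vec3" where
  "vB (m11, m12, m21, m22) (w1, w2, w3) = (m22 * w1 - m21 * w2, - m12 * w1 + m11 * w2, w3)"
fun xm :: "'k::field m2 \<Rightarrow> 'k oct \<Rightarrow> 'k oct" where
  "xm M (a, v, w, b) = (a, vA M v, vB M w, b)"

lemma xm_mm: "xm (mm A B) = xm A \<circ> xm B"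
proof
  fix x :: "'a oct"
  obtain a v w b where x: "x = (a,v,w,b)" by (cases x)
  show "xm (mm A B) x = (xm A \<circ> xm B) x"
    by (cases A; cases B; cases v; cases w) (simp add: x algebra_simps)
qed

lemma xm_I: "xm mI = id"
proof
  fix x :: "'a oct"
  obtain a v w b where x: "x = (a,v,w,b)" by (cases x)
  show "xm mI x = id x" by (cases v; cases w) (simp add: x mI_def)
qed

lemma mm_minv2: "mdet M = 1 \<Longrightarrow> mm (minv M) M = mI"
  by (cases M) (simp add: mI_def algebra_simps)

lemma vA_add: "vA M (v3_add u v) = v3_add (vA M u) (vA M v)"
  by (cases M; cases u; cases v) (simp add: algebra_simps)
lemma vB_add: "vB M (v3_add u v) = v3_add (vB M u) (vB M v)"
  by (cases M; cases u; cases v) (simp add: algebra_simps)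
lemma vA_smult: "vA M (v3_smult c u) = v3_smult c (vA M u)"
  by (cases M; cases u) (simp add: algebra_simps)
lemma vB_smult: "vB M (v3_smult c u) = v3_smult c (vB M u)"
  by (cases M; cases u) (simp add: algebra_simps)

lemma dot_AB:
  assumes "mdet M = 1"
  shows "v3_dot (vA M v) (vB M w) = v3_dot v w"
proof -
  obtain m11 m12 m21 m22 where M: "M = (m11, m12, m21, m22)" by (cases M)
  obtain v1 v2 v3 where v: "v = (v1, v2, v3)" by (cases v)
  obtain w1 w2 w3 where w: "w = (w1, w2, w3)" by (cases w)
  have d: "m11 * m22 - m12 * m21 = 1" using assms by (simp add: M)
  have "v3_dot (vA M v) (vB M w) = (m11 * m22 - m12 * m21) * (v1 * w1 + v2 * w2) + v3 * w3"
    by (simp add: M v w algebra_simps)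
  also have "\<dots> = v3_dot v w" unfolding d by (simp add: v w)
  finally show ?thesis .
qed

lemma dot_BA:
  assumes "mdet M = 1"
  shows "v3_dot (vB M w) (vA M v) = v3_dot w v"
proof -
  obtain m11 m12 m21 m22 where M: "M = (m11, m12, m21, m22)" by (cases M)
  obtain v1 v2 v3 where v: "v = (v1, v2, v3)" by (cases v)
  obtain w1 w2 w3 where w: "w = (w1, w2, w3)" by (cases w)
  have d: "m11 * m22 - m12 * m21 = 1" using assms by (simp add: M)
  have "v3_dot (vB M w) (vA M v) = (m11 * m22 - m12 * m21) * (v1 * w1 + v2 * w2) + v3 * w3"
    by (simp add: M v w algebra_simps)
  also have "\<dots> = v3_dot w v" unfolding d by (simp add: v w algebra_simps)
  finally show ?thesis .
qed

lemma cross_AA: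
  assumes "mdet M = 1"
  shows "v3_cross (vA M v) (vA M u) = vB M (v3_cross v u)"
proof -
  obtain m11 m12 m21 m22 where M: "M = (m11, m12, m21, m22)" by (cases M)
  obtain v1 v2 v3 where v: "v = (v1, v2, v3)" by (cases v)
  obtain u1 u2 u3 where u: "u = (u1, u2, u3)" by (cases u)
  have d: "m11 * m22 - m12 * m21 = 1" using assms by (simp add: M)
  have e3: "(m11 * v1 + m12 * v2) * (m21 * u1 + m22 * u2) - (m21 * v1 + m22 * v2) * (m11 * u1 + m12 * u2)
      = (m11 * m22 - m12 * m21) * (v1 * u2 - v2 * u1)" by (simp add: algebra_simps)
  show ?thesis using e3 d by (simp add: M v u algebra_simps)
qed

lemma cross_BB:
  assumes "mdet M = 1"
  shows "v3_cross (vB M v) (vB M u) = vA M (v3_cross v u)"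
proof -
  obtain m11 m12 m21 m22 where M: "M = (m11, m12, m21, m22)" by (cases M)
  obtain v1 v2 v3 where v: "v = (v1, v2, v3)" by (cases v)
  obtain u1 u2 u3 where u: "u = (u1, u2, u3)" by (cases u)
  have d: "m11 * m22 - m12 * m21 = 1" using assms by (simp add: M)
  have e3: "(m22 * v1 - m21 * v2) * (- m12 * u1 + m11 * u2) - (- m12 * v1 + m11 * v2) * (m22 * u1 - m21 * u2)
      = (m11 * m22 - m12 * m21) * (v1 * u2 - v2 * u1)" by (simp add: algebra_simps)
  show ?thesis using e3 d by (simp add: M v u algebra_simps)
qed

lemma xm_G2:
  assumes "mdet M = 1"
  shows "xm M \<in> G2_set"
proof -
  have "xm M \<circ> xm (minv M) = id" "xm (minv M) \<circ> xm M = id"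
    using assms by (simp_all add: xm_mm[symmetric] mm_minv mm_minv2 xm_I)
  hence bij: "bij (xm M)" using o_bij by blast
  have "xm M (oct_add x y) = oct_add (xm M x) (xm M y)" for x y
    by (cases x; cases y) (simp add: vA_add vB_add)
  moreover have "xm M (oct_smult c x) = oct_smult c (xm M x)" for c x
    by (cases x) (simp add: vA_smult vB_smult)
  moreover have "xm M (oct_mult x y) = oct_mult (xm M x) (xm M y)" for x y
    by (cases x; cases y) (simp add: vA_add vB_add vA_smult vB_smult dot_AB dot_BA cross_AA cross_BB assms)
  ultimately have "semi id (xm M)" using bij by (intro semiI) simp_all
  thus ?thesis by (simp add: G2_set_semi)
qed

lemma xm_pow:
  assumes "mdet M = 1"
  shows "xm M [^]\<^bsub>G2\<^esub> (n::nat) = xm (mpow M n)"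
proof (induction n)
  case 0 thus ?case by (simp add: G2_one xm_I)
next
  case (Suc n)
  have "mdet (mpow M n) = 1" using assms by (simp add: mdet_mpow)
  thus ?case using Suc assms by (simp add: G2_mult xm_G2 xm_mm)
qed

lemma funpow_fix_mult:
  assumes "(\<pi> ^^ p) y = y"
  shows "(\<pi> ^^ (p * k)) y = y"
proof (induction k)
  case (Suc k)
  have "p * Suc k = p + p * k" by simp
  hence "(\<pi> ^^ (p * Suc k)) y = (\<pi> ^^ p) ((\<pi> ^^ (p * k)) y)"
    by (metis funpow_add o_apply)
  thus ?case using Suc assms by simp
qed simp

lemma orbit_card:
  assumes "(\<pi> ^^ p) y = y" "Factorial_Ring.prime p" "\<pi> y \<noteq> y"
  shows "card ((\<lambda>i. (\<pi> ^^ i) y) ` {0..<p}) = p"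
proof -
  have "inj_on (\<lambda>i. (\<pi> ^^ i) y) {0..<p}"
  proof (rule inj_onI, rule ccontr)
    fix i j assume ij: "i \<in> {0..<p}" "j \<in> {0..<p}" "(\<pi> ^^ i) y = (\<pi> ^^ j) y" "i \<noteq> j"
    have key: "\<And>i j. i < j \<Longrightarrow> j < p \<Longrightarrow> (\<pi> ^^ i) y = (\<pi> ^^ j) y \<Longrightarrow> False"
    proof -
      fix i j assume a: "i < j" "j < p" "(\<pi> ^^ i) y = (\<pi> ^^ j) y"
      define k where "k = j - i"
      have k: "0 < k" "k < p" using a by (auto simp: k_def)
      have "(\<pi> ^^ (p - i + j)) y = (\<pi> ^^ (p - i)) ((\<pi> ^^ j) y)" by (simp add: funpow_add)
      also have "\<dots> = (\<pi> ^^ (p - i)) ((\<pi> ^^ i) y)" using a by simp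
      also have "\<dots> = (\<pi> ^^ (p - i + i)) y" by (metis funpow_add o_apply)
      also have "p - i + i = p" using a by simp
      finally have "(\<pi> ^^ (p - i + j)) y = y" using assms by simp
      moreover have "p - i + j = k + p" using a by (simp add: k_def)
      ultimately have "(\<pi> ^^ k) ((\<pi> ^^ p) y) = y" by (simp add: funpow_add)
      hence kf: "(\<pi> ^^ k) y = y" using assms by simp
      have "coprime k p" using k assms(2)
        by (metis coprime_commute less_not_refl nat_dvd_not_less prime_imp_coprime_nat)
      hence g: "gcd k p = 1" by simp
      obtain u v where e: "k * u = p * v + gcd k p" using bezout_nat[of k p] k by auto
      have "y = (\<pi> ^^ (k * u)) y" using funpow_fix_mult[OF kf] by simp
      also have "\<dots> = \<pi> ((\<pi> ^^ (p * v)) y)" by (simp add: e g funpow_add)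
      also have "\<dots> = \<pi> y" using funpow_fix_mult[OF assms(1)] by simp
      finally show False using assms(3) by simp
    qed
    show False
    proof (cases "i < j")
      case True thus False using key[of i j] ij by auto
    next
      case False hence "j < i" using ij by simp
      thus False using key[of j i] ij by auto
    qed
  qed
  thus ?thesis by (simp add: card_image)
qed

lemma fixpoint_exists:
  assumes fin: "finite Y" and cl: "\<And>y. y \<in> Y \<Longrightarrow> \<pi> y \<in> Y"
    and per: "\<And>y. y \<in> Y \<Longrightarrow> (\<pi> ^^ p) y = y"
    and pr: "Factorial_Ring.prime p" and nd: "\<not> p dvd card Y"
  shows "\<exists>y \<in> Y. \<pi> y = y"
proof (rule ccontr)
  assume nf: "\<not> ?thesis"
  define orb where "orb y = {(\<pi> ^^ i) y | i. True}" for y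
  have clp: "(\<pi> ^^ i) y \<in> Y" if "y \<in> Y" for i y
    using that by (induction i) (auto intro: cl)
  have p0: "p > 0" using pr prime_gt_0_nat by blast
  have orb_eq: "orb y = (\<lambda>i. (\<pi> ^^ i) y) ` {0..<p}" if "y \<in> Y" for y
  proof
    show "orb y \<subseteq> (\<lambda>i. (\<pi> ^^ i) y) ` {0..<p}"
    proof
      fix z assume "z \<in> orb y"
      then obtain i where z: "z = (\<pi> ^^ i) y" by (auto simp: orb_def)
      have "i = i mod p + p * (i div p)" by simp
      hence "(\<pi> ^^ i) y = (\<pi> ^^ (i mod p)) ((\<pi> ^^ (p * (i div p))) y)"
        by (metis funpow_add o_apply)
      also have "\<dots> = (\<pi> ^^ (i mod p)) y" using funpow_fix_mult[OF per[OF that]] by simp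
      finally show "z \<in> (\<lambda>i. (\<pi> ^^ i) y) ` {0..<p}" using z p0 by auto
    qed
  qed (auto simp: orb_def)
  have orb_sub: "orb y \<subseteq> Y" if "y \<in> Y" for y using clp that by (auto simp: orb_def)
  have orb_trans: "orb z \<subseteq> orb y" if zy: "z \<in> orb y" for z y
  proof
    fix w assume "w \<in> orb z"
    then obtain j where w: "w = (\<pi> ^^ j) z" by (auto simp: orb_def)
    obtain i where z: "z = (\<pi> ^^ i) y" using zy by (auto simp: orb_def)
    have "w = (\<pi> ^^ (j + i)) y" by (simp add: w z funpow_add)
    thus "w \<in> orb y" by (auto simp: orb_def)
  qed
  have orb_sym: "y \<in> orb z" if zy: "z \<in> orb y" and yY: "y \<in> Y" for z y
  proof -
    obtain i where z: "z = (\<pi> ^^ i) y" using zy by (auto simp: orb_def)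
    have "(\<pi> ^^ ((p - 1) * i)) z = (\<pi> ^^ ((p - 1) * i + i)) y" by (simp add: z funpow_add)
    also have "(p - 1) * i + i = p * i" using p0 by (simp add: algebra_simps)
    also have "(\<pi> ^^ (p * i)) y = y" using funpow_fix_mult[OF per[OF yY]] by simp
    finally show ?thesis by (auto simp: orb_def)
  qed
  have selfo: "y \<in> orb y" for y by (auto simp: orb_def intro: exI[of _ 0])
  let ?C = "orb ` Y"
  have U: "\<Union>?C = Y" using orb_sub selfo by blast
  have "p dvd card (\<Union>?C)"
  proof (rule dvd_partition)
    show "finite (\<Union>?C)" using U fin by simp
    show "\<forall>c\<in>?C. p dvd card c"
    proof
      fix c assume "c \<in> ?C"
      then obtain y where y: "y \<in> Y" "c = orb y" by blast
      have "card c = p" using y orb_eq[OF y(1)] orbit_card[OF per[OF y(1)] pr] nf by auto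
      thus "p dvd card c" by simp
    qed
    show "\<forall>c1\<in>?C. \<forall>c2\<in>?C. c1 \<noteq> c2 \<longrightarrow> c1 \<inter> c2 = {}"
    proof (intro ballI impI)
      fix c1 c2 assume c: "c1 \<in> ?C" "c2 \<in> ?C" "c1 \<noteq> c2"
      then obtain y1 y2 where y: "y1 \<in> Y" "y2 \<in> Y" "c1 = orb y1" "c2 = orb y2" by blast
      show "c1 \<inter> c2 = {}"
      proof (rule ccontr)
        assume "c1 \<inter> c2 \<noteq> {}"
        then obtain z where z: "z \<in> orb y1" "z \<in> orb y2" using y by blast
        have "orb y1 = orb z" using orb_trans[OF z(1)] orb_trans[OF orb_sym[OF z(1) y(1)]] by blast
        moreover have "orb y2 = orb z" using orb_trans[OF z(2)] orb_trans[OF orb_sym[OF z(2) y(2)]] by blast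
        ultimately show False using c y by simp
      qed
    qed
  qed
  thus False using U nd by simp
qed

lemma (in group) sylow_conj:
  assumes fin: "finite (carrier G)" and R: "subgroup R G"
    and cR: "card R = p ^ multiplicity p (order G)" and pr: "Factorial_Ring.prime p"
    and x: "x \<in> carrier G" and xp: "x [^] p = \<one>"
  shows "\<exists>g \<in> carrier G. g \<otimes> x \<otimes> inv g \<in> R"
proof -
  define \<pi> where "\<pi> C = C #> x" for C
  have Rs: "R \<subseteq> carrier G" using R subgroup.subset by blast
  have pit: "(\<pi> ^^ n) (R #> a) = R #> (a \<otimes> x [^] n)" if "a \<in> carrier G" for a n
  proof (induction n)
    case 0 thus ?case using that by simp
  next
    case (Suc n)
    have "(\<pi> ^^ Suc n) (R #> a) = \<pi> ((\<pi> ^^ n) (R #> a))" by simp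
    also have "\<dots> = (R #> (a \<otimes> x [^] n)) #> x" using Suc unfolding \<pi>_def by simp
    also have "\<dots> = R #> (a \<otimes> x [^] n \<otimes> x)" using Rs that x by (simp add: coset_mult_assoc)
    also have "\<dots> = R #> (a \<otimes> x [^] Suc n)" using that x by (simp add: m_assoc)
    finally show ?case .
  qed
  have "\<exists>C \<in> rcosets R. \<pi> C = C"
  proof (rule fixpoint_exists[where p = p])
    show "finite (rcosets R)" using fin by (simp add: RCOSETS_def)
    show "\<pi> C \<in> rcosets R" if "C \<in> rcosets R" for C
      using that Rs x by (auto simp: RCOSETS_def \<pi>_def coset_mult_assoc intro!: rcosetsI)
    show "(\<pi> ^^ p) C = C" if "C \<in> rcosets R" for C
      using that pit xp by (auto simp: RCOSETS_def)
    show "Factorial_Ring.prime p" by (rule pr)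
    show "\<not> p dvd card (rcosets R)"
    proof
      assume "p dvd card (rcosets R)"
      then obtain k where k: "card (rcosets R) = p * k" by blast
      have "order G = p ^ Suc (multiplicity p (order G)) * k"
        using lagrange[OF R] k cR by (simp add: algebra_simps)
      hence "p ^ Suc (multiplicity p (order G)) dvd order G" by (metis dvd_triv_left)
      moreover have "order G \<noteq> 0" using fin order_gt_0_iff_finite by (metis not_gr0 order_def)
      ultimately show False using pr
        by (metis multiplicity_gt_zero_iff not_prime_unit prime_imp_prime_elem
            le_imp_power_dvd Suc_n_not_le_n multiplicity_geI prime_nat_iff zero_neq_one)
    qed
  qed
  then obtain a where a: "a \<in> carrier G" "R #> (a \<otimes> x) = R #> a"
    by (auto simp: RCOSETS_def \<pi>_def coset_mult_assoc Rs x)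
  have "a \<otimes> x \<in> R #> a" using a rcos_self[of "a \<otimes> x" R] R x by simp
  hence "a \<otimes> x \<otimes> inv a \<in> R" using subgroup.rcos_module_imp[OF R is_group a(1)] by blast
  thus ?thesis using a by blast
qed

lemma commute_fix:
  fixes M :: "'k::field m2"
  assumes sa: "semi s a" and fs: "field_aut s" and dM: "mdet M = 1"
    and com: "\<And>z. a (xm M z) = xm M (a z)" and c2: "mtr M \<noteq> 2"
  shows "s (mtr M) = mtr M"
proof (rule ccontr)
  assume ne: "s (mtr M) \<noteq> mtr M"
  define c where "c = mtr M"
  obtain m11 m12 m21 m22 where M: "M = (m11, m12, m21, m22)" by (cases M)
  have c: "c = m11 + m22" by (simp add: c_def M)
  define XM where "XM = xm M"
  define XI where "XI = xm (minv M)"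
  have c1: "XM \<circ> XI = id" unfolding XM_def XI_def using dM by (simp only: xm_mm[symmetric] mm_minv xm_I)
  have c2': "XI \<circ> XM = id" unfolding XM_def XI_def using dM by (simp only: xm_mm[symmetric] mm_minv2 xm_I)
  have XXi: "XM (XI z) = z" for z using fun_cong[OF c1, of z] by simp
  have XiX: "XI (XM z) = z" for z using fun_cong[OF c2', of z] by simp
  have comi: "a (XI z) = XI (a z)" for z
  proof -
    have "a z = XM (a (XI z))" using com[of "XI z"] XXi by (simp add: XM_def)
    hence "XI (a z) = XI (XM (a (XI z)))" by simp
    thus ?thesis using XiX by simp
  qed
  define p :: "'k oct" where "p = (0, (1, 0, 0), (0, 0, 0), 0)"
  have h1: "oct_add (XM p) (XI p) = oct_smult c p"
    by (simp add: XM_def XI_def p_def M c)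
  define q where "q = a p"
  have "a (oct_add (XM p) (XI p)) = oct_add (XM q) (XI q)"
    using semiD(2)[OF sa] com comi by (simp add: q_def XM_def)
  moreover have "a (oct_smult c p) = oct_smult (s c) q" using semiD(3)[OF sa] by (simp add: q_def)
  ultimately have E: "oct_add (XM q) (XI q) = oct_smult (s c) q" using h1 by simp
  obtain qa q1 q2 q3 q4 q5 q6 qb where q: "q = (qa, (q1, q2, q3), (q4, q5, q6), qb)"
    by (cases q rule: oct_cases)
  have cmp: "oct_add (XM q) (XI q) = (2 * qa, (c * q1, c * q2, 2 * q3), (c * q4, c * q5, 2 * q6), 2 * qb)"
    by (simp add: XM_def XI_def q M c algebra_simps mult_2)
  have "(2 * qa, (c * q1, c * q2, 2 * q3), (c * q4, c * q5, 2 * q6), 2 * qb) = oct_smult (s c) q"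
    by (rule trans[OF cmp[symmetric] E])
  hence E1: "(2 * qa, (c * q1, c * q2, 2 * q3), (c * q4, c * q5, 2 * q6), 2 * qb) =
     (s c * qa, (s c * q1, s c * q2, s c * q3), (s c * q4, s c * q5, s c * q6), s c * qb)"
    by (simp only: q oct_smult.simps v3_smult.simps)
  have E2: "2 * qa = s c * qa" "c * q1 = s c * q1" "c * q2 = s c * q2" "2 * q3 = s c * q3"
    "c * q4 = s c * q4" "c * q5 = s c * q5" "2 * q6 = s c * q6" "2 * qb = s c * qb"
    using E1 by (simp only: prod.inject)+
  have s2: "s 2 = 2"
  proof -
    have t: "(2::'k) = 1 + 1" by simp
    have "s (1 + 1) = s 1 + s 1" using fs by (simp only: field_aut_def)
    also have "\<dots> = 1 + 1" using field_aut_basic(2)[OF fs] by (simp only:)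
    finally show ?thesis using t by (simp only:)
  qed
  have inj: "inj s" using fs by (simp add: field_aut_def bij_is_inj)
  have sc2: "s c \<noteq> 2"
  proof
    assume "s c = 2"
    hence "s c = s 2" using s2 by simp
    hence "c = 2" using inj by (simp add: inj_eq)
    thus False using c2 c_def by simp
  qed
  have ne': "s c \<noteq> c" using ne c_def by simp
  have z1: "x = 0" if "u * x = v * x" "u \<noteq> v" for u v x :: 'k
  proof -
    have "(u - v) * x = 0" using that by (simp add: algebra_simps)
    thus ?thesis using that by simp
  qed
  have sc2': "2 \<noteq> s c" using sc2 by auto
  have ne'': "c \<noteq> s c" using ne' by auto
  have "qa = 0" "q3 = 0" "q6 = 0" "qb = 0"
    using z1[OF E2(1) sc2'] z1[OF E2(4) sc2'] z1[OF E2(7) sc2'] z1[OF E2(8) sc2'] by simp_all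
  moreover have "q1 = 0" "q2 = 0" "q4 = 0" "q5 = 0"
    using z1[OF E2(2) ne''] z1[OF E2(3) ne''] z1[OF E2(5) ne''] z1[OF E2(6) ne''] by simp_all
  ultimately have q0: "q = (0, (0,0,0), (0,0,0), 0)" using q by simp
  have "a (0, (0,0,0), (0,0,0), 0) = (0, (0,0,0), (0,0,0), 0)"
  proof -
    have "oct_smult 0 p = (0, (0,0,0), (0,0,0), 0)" by (simp add: p_def)
    hence "a (0, (0,0,0), (0,0,0), 0) = oct_smult (s 0) (a p)" using semiD(3)[OF sa, of 0 p] by simp
    also have "\<dots> = (0, (0,0,0), (0,0,0), 0)" using field_aut_basic(1)[OF fs] q0 q_def q
      by simp
    finally show ?thesis .
  qed
  hence "a p = a (0, (0,0,0), (0,0,0), 0)" using q0 q_def by simp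
  hence "p = (0, (0,0,0), (0,0,0), 0)" using semiD(1)[OF sa] by (simp add: bij_is_inj inj_eq)
  thus False by (simp add: p_def)
qed

lemma mpow_step:
  assumes "mdet M = 1" "mpow M n = mlin x y M"
  shows "mpow M (Suc n) = mlin (- y) (x + y * mtr M) M"
  using assms apply (cases M) apply (simp add: algebra_simps)
  by (metis (no_types, lifting) distrib_right mult.assoc mult_1)

lemma mpow_minv_cancel:
  assumes "mdet M = 1" "mm N M = M"
  shows "N = mI"
proof -
  have "mm (mm N M) (minv M) = mm M (minv M)" using assms(2) by simp
  thus ?thesis using assms(1) by (simp add: mm_assoc mm_minv)
qed

lemma dvd_from_mpow:
  assumes "mpow M k = mI" "mpow M r = mI" "M \<noteq> mI" "Factorial_Ring.prime r"
  shows "r dvd k"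
proof (rule ccontr)
  assume "\<not> r dvd k"
  hence "coprime r k" using assms(4) by (simp add: prime_imp_coprime_nat)
  hence "coprime k r" by (simp add: coprime_commute)
  hence "gcd k r = 1" by (metis coprime_iff_gcd_eq_1)
  hence "mpow M 1 = mI" using mpow_gcd_one[OF assms(1,2)] by simp
  thus False using assms(3) by simp
qed

lemma s_id_from_fix:
  fixes M :: "'k::{field,finite} m2"
  assumes fs: "field_aut s" and cU: "card (UNIV :: 'k set) = 3 ^ f"
    and three: "(3::'k) = 0" and two: "(2::'k) \<noteq> 0"
    and dM: "mdet M = 1" and Mr: "mpow M r = mI" and MI: "M \<noteq> mI"
    and pr: "Factorial_Ring.prime r" and ordr: "ord r 3 = 2 * f"
    and sc: "s (mtr M) = mtr M" and c4: "(mtr M)^2 \<noteq> 4"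
  shows "s = id"
proof -
  define F where "F = {x. s x = x}"
  note fb = field_aut_basic[OF fs]
  have add: "s (a + b) = s a + s b" for a b using fs by (simp add: field_aut_def)
  have mul: "s (a * b) = s a * s b" for a b using fs by (simp add: field_aut_def)
  have sinv: "s (inverse x) = inverse (s x)" for x
  proof (cases "x = 0")
    case True thus ?thesis using fb by simp
  next
    case False
    have "s x * s (inverse x) = 1" using mul[of x "inverse x"] False fb by simp
    thus ?thesis by (metis inverse_unique)
  qed
  have F0: "0 \<in> F" "1 \<in> F" using fb by (auto simp: F_def)
  have Fadd: "x + y \<in> F" if "x \<in> F" "y \<in> F" for x y using that add by (simp add: F_def)
  have Fneg: "- x \<in> F" if "x \<in> F" for x using that fb by (simp add: F_def)
  have Fmul: "x * y \<in> F" if "x \<in> F" "y \<in> F" for x y using that mul by (simp add: F_def)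
  have Finv: "inverse x \<in> F" if "x \<in> F" for x using that sinv by (simp add: F_def)
  have "card F dvd 3 ^ f" using card_subgroup_dvd[OF F0(1) Fadd Fneg] cU by simp
  then obtain m where m: "m \<le> f" "card F = 3 ^ m"
    using divides_primepow_nat[of 3 "card F" f] by auto
  have "card {0::'k, 1} \<le> card F" using F0 by (intro card_mono) auto
  hence "card F \<ge> 2" by simp
  hence m1: "m \<ge> 1" using m by (cases m) auto
  define c where "c = mtr M"
  have cF: "c \<in> F" using sc by (simp add: F_def c_def)
  have cpow: "c ^ (3 ^ m) = c"
  proof (cases "c = 0")
    case True thus ?thesis by simp
  next
    case False
    have "c ^ (card F - 1) = 1" by (rule mulG_fermat[OF F0(2) Fmul Finv cF False F0(1)])
    hence "c ^ (card F - 1) * c = c" by simp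
    moreover have "card F - 1 + 1 = card F" using m by simp
    ultimately show ?thesis using m(2) by (metis power_add power_one_right)
  qed
  define N where "N = mpow M (3 ^ m)"
  have dN: "mdet N = 1" using dM by (simp add: N_def mdet_mpow)
  have trN: "mtr N = mtr M" using tr_pow3[OF dM three, of m] cpow by (simp add: N_def c_def)
  obtain x y where xy: "N = mlin x y M" using mpow_span[OF dM] N_def by blast
  have "N = M \<or> N = minv M" by (rule same_trace[OF dM dN xy trN c4 two])
  hence dv: "r dvd 3 ^ m - 1 \<or> r dvd 3 ^ m + 1"
  proof
    assume "N = M"
    have e: "3 ^ m = Suc (3 ^ m - 1)" by simp
    have "mm (mpow M (3 ^ m - 1)) M = M" using \<open>N = M\<close> N_def e by (metis mpow.simps(2))
    hence "mpow M (3 ^ m - 1) = mI" by (rule mpow_minv_cancel[OF dM])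
    thus ?thesis using dvd_from_mpow[OF _ Mr MI pr] by blast
  next
    assume "N = minv M"
    have "mpow M (3 ^ m + 1) = mm N M" by (simp add: N_def)
    also have "\<dots> = mI" using \<open>N = minv M\<close> mm_minv2[OF dM] by simp
    finally show ?thesis using dvd_from_mpow[OF _ Mr MI pr] by blast
  qed
  have e: "(3::nat) ^ (2 * m) - 1 = (3 ^ m - 1) * (3 ^ m + 1)"
  proof -
    have "(3::nat) ^ (2 * m) = 3 ^ m * 3 ^ m" by (simp add: power_add[symmetric] mult_2)
    moreover have "(1::nat) \<le> 3 ^ m" by simp
    ultimately show ?thesis by (simp add: algebra_simps)
  qed
  have "r dvd (3 ^ m - 1) * (3 ^ m + 1)"
  proof (cases "r dvd 3 ^ m - 1")
    case True thus ?thesis by (rule dvd_mult2)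
  next
    case False hence "r dvd 3 ^ m + 1" using dv by blast
    thus ?thesis by (rule dvd_mult)
  qed
  hence "r dvd 3 ^ (2 * m) - 1" by (simp only: e)
  hence "[3 ^ (2 * m) = 1] (mod r)" by (subst cong_altdef_nat) simp_all
  hence "ord r 3 dvd 2 * m" using ord_divides by blast
  hence "f dvd m" using ordr by simp
  hence "m = f" using m m1 by (metis dvd_imp_le le_antisym not_one_le_zero gr0I)
  hence "card F = card (UNIV :: 'k set)" using m cU by simp
  hence "F = UNIV" by (metis card_subset_eq finite subset_UNIV)
  hence "s x = x" for x by (auto simp: F_def)
  thus ?thesis by (simp add: fun_eq_iff)
qed

lemma mlin0: "mlin x 0 M = (x, 0, 0, x)" by (cases M) simp

theorem lemma5p8:
  fixes K_witness :: "'k::{field, finite} itself"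
    and f :: nat and q :: nat and r :: nat
    and \<sigma> :: "'k \<Rightarrow> 'k"
    and R :: "('k oct \<Rightarrow> 'k oct) set"
  assumes "q = 3 ^ f" and "f > 1" and "card (UNIV :: 'k set) = q"
    and "field_aut \<sigma>" and "Factorial_Ring.prime (LEAST n. n > 0 \<and> \<sigma> ^^ n = id)"
    and "Factorial_Ring.prime r" and "r dvd q + 1" and "ord r 3 = 2 * f"
    and "sylow_subgroup r R (G2 :: ('k oct \<Rightarrow> 'k oct) monoid)"
  shows "centraliser_in (A0hat :: ('k oct \<Rightarrow> 'k oct) set) R \<subseteq> G2_set"
proof -
  have cU: "card (UNIV :: 'k set) = 3 ^ f" using assms(1,3) by simp
  have three: "(3::'k) = 0" by (rule char3[OF cU])
  have two: "(2::'k) \<noteq> 0"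
  proof
    assume h: "(2::'k) = 0"
    have "(1::'k) = 3 - 2" by simp
    also have "\<dots> = 0" using h three by simp
    finally show False by simp
  qed
  have pr: "Factorial_Ring.prime r" by (rule assms(6))
  have r2: "r \<noteq> 2"
  proof
    assume "r = 2"
    have "[3 = 1] (mod (2::nat))" by (simp add: cong_def)
    hence "ord 2 (3::nat) = Suc 0" by (simp add: ord_eq_Suc_0_iff)
    thus False using assms(8) \<open>r = 2\<close> by simp
  qed
  have r3: "r \<noteq> 3"
  proof
    assume "r = 3"
    hence "3 dvd 3 ^ f + (1::nat)" using assms(1,7) by simp
    moreover have "(3::nat) dvd 3 ^ f" using assms(2) by simp
    ultimately have "(3::nat) dvd 1" using dvd_add_right_iff by blast
    thus False by simp
  qed
  have rge: "r \<ge> 2" using pr prime_ge_2_nat by blast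
  have q1: "q \<ge> 1" using assms(1) by simp
  have rqq: "r dvd q * q - 1"
  proof -
    have e: "q * q - 1 = (q + 1) * (q - 1)" using q1 by (simp add: algebra_simps)
    have "r dvd (q + 1) * (q - 1)" using assms(7) by (rule dvd_mult2)
    thus ?thesis by (simp only: e)
  qed
  have cop: "coprime r (q - 1)"
  proof -
    have "\<not> r dvd q - 1"
    proof
      assume "r dvd q - 1"
      hence "r dvd (q + 1) - (q - 1)" using assms(7) by (rule dvd_diff_nat[rotated])
      moreover have "(q + 1) - (q - 1) = 2" using q1 by simp
      ultimately have "r dvd 2" by simp
      hence "r \<le> 2" by (simp add: dvd_imp_le)
      thus False using rge r2 by simp
    qed
    thus ?thesis using pr by (simp add: prime_imp_coprime_nat)
  qed
  obtain M :: "'k m2" where M: "mdet M = 1" "mpow M r = mI" "M \<noteq> mI"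
    using exists_M[OF assms(3) pr rqq cop two] by blast
  define c where "c = mtr M"
  have c4: "c ^ 2 \<noteq> 4"
  proof
    assume "c ^ 2 = 4"
    have f4: "(4::'k) = 1"
    proof -
      have "(4::'k) = 3 + 1" by simp
      thus ?thesis using three by simp
    qed
    have cc: "c * c = 1" using \<open>c ^ 2 = 4\<close> f4 by (simp add: power2_eq_square)
    have m1: "mpow M 1 = mlin 0 1 M" by (cases M) (simp add: mI_def)
    have m2: "mpow M 2 = mlin (-1) c M" using mpow_step[OF M(1) m1] by (simp add: c_def numeral_2_eq_2)
    have m3: "mpow M 3 = mlin (-c) (-1 + c * c) M" using mpow_step[OF M(1) m2] by (simp add: c_def numeral_3_eq_3 numeral_2_eq_2)
    hence m3': "mpow M 3 = (- c, 0, 0, - c)" using cc by (simp add: mlin0)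
    have "c = 1 \<or> c = -1" using cc by (metis square_eq_1_iff)
    hence "r dvd 3 \<or> r dvd 6"
    proof
      assume "c = -1"
      hence "mpow M 3 = mI" using m3' by (simp add: mI_def)
      thus ?thesis using dvd_from_mpow[OF _ M(2,3) pr] by blast
    next
      assume "c = 1"
      have "mpow M 6 = mm (mpow M 3) (mpow M 3)" using mpow_add[of M 3 3] by simp
      also have "\<dots> = mI" using m3' \<open>c = 1\<close> by (simp add: mI_def)
      finally show ?thesis using dvd_from_mpow[OF _ M(2,3) pr] by blast
    qed
    moreover have n3: "\<not> r dvd 3"
    proof
      assume "r dvd 3"
      hence "r \<le> 3" by (simp add: dvd_imp_le)
      thus False using rge r2 r3 by simp
    qed
    moreover have "\<not> r dvd 6"
    proof
      assume "r dvd 6"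
      hence "r dvd 2 * 3" by simp
      hence "r dvd 2 \<or> r dvd 3" using pr prime_dvd_mult_iff by blast
      moreover have "\<not> r dvd 2"
      proof
        assume "r dvd 2"
        hence "r \<le> 2" by (simp add: dvd_imp_le)
        thus False using rge r2 by simp
      qed
      ultimately show False using n3 by blast
    qed
    ultimately show False by blast
  qed
  have c2: "c \<noteq> 2"
  proof
    assume "c = 2"
    hence "c ^ 2 = 4" by simp
    thus False using c4 by simp
  qed
  define x0 where "x0 = xm M"
  have x0c: "x0 \<in> carrier G2" using xm_G2[OF M(1)] by (simp add: x0_def G2_carrier)
  have x0p: "x0 [^]\<^bsub>G2\<^esub> r = \<one>\<^bsub>G2\<^esub>" using xm_pow[OF M(1), of r] M(2) by (simp add: x0_def xm_I G2_one)
  interpret G: group "G2 :: ('k oct \<Rightarrow> 'k oct) monoid" by (rule group_G2)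
  have fin: "finite (carrier (G2 :: ('k oct \<Rightarrow> 'k oct) monoid))" by simp
  have Rs: "subgroup R G2" "card R = r ^ multiplicity r (order (G2 :: ('k oct \<Rightarrow> 'k oct) monoid))"
    using assms(9) by (simp_all add: sylow_subgroup_def)
  obtain g where g: "g \<in> carrier G2" "g \<otimes>\<^bsub>G2\<^esub> x0 \<otimes>\<^bsub>G2\<^esub> inv\<^bsub>G2\<^esub> g \<in> R"
    using G.sylow_conj[OF fin Rs(1) Rs(2) pr x0c x0p] by blast
  define gi where "gi = inv_into UNIV g"
  have gG: "g \<in> G2_set" using g by (simp add: G2_carrier)
  have x0G: "x0 \<in> G2_set" using x0c by (simp add: G2_carrier)
  have giG: "gi \<in> G2_set" using G.inv_closed[OF g(1)] G2_inv[OF gG] by (simp add: gi_def G2_carrier)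
  have gx: "g \<otimes>\<^bsub>G2\<^esub> x0 = g \<circ> x0" by (rule G2_mult[OF gG x0G])
  have gxG: "g \<circ> x0 \<in> G2_set" using G.m_closed[OF g(1) x0c] gx by (simp add: G2_carrier)
  define y where "y = g \<circ> x0 \<circ> gi"
  have yR: "y \<in> R" using g(2) G2_mult[OF gxG giG] G2_inv[OF gG] gx by (simp add: y_def gi_def)
  have sg: "semi id g" using gG by (simp add: G2_set_semi)
  have bg: "bij g" using semiD(1)[OF sg] .
  have ggi: "g (gi w) = w" for w using bg by (simp add: gi_def bij_is_surj surj_f_inv_f)
  have gig: "gi (g w) = w" for w using bg by (simp add: gi_def bij_is_inj inv_f_f)
  have sgi: "semi id gi" using giG by (simp add: G2_set_semi)
  show ?thesis
  proof
    fix a assume aC: "a \<in> centraliser_in A0hat R"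
    hence aA: "a \<in> A0hat" and acom: "\<And>x. x \<in> R \<Longrightarrow> a \<circ> x = x \<circ> a"
      by (auto simp: centraliser_in_def)
    obtain s where s: "field_aut s" "semi s a" using A0hat_semi[OF aA] by blast
    define a' where "a' = gi \<circ> a \<circ> g"
    have sa': "semi s a'" using semi_comp[OF semi_comp[OF sgi s(2)] sg] by (simp add: a'_def)
    have ay: "a (y w) = y (a w)" for w using fun_cong[OF acom[OF yR], of w] by simp
    have com: "a' (xm M z) = xm M (a' z)" for z
    proof -
      have "g (x0 z) = y (g z)" by (simp add: y_def gig)
      hence "a' (x0 z) = gi (y (a (g z)))" by (simp add: a'_def ay)
      also have "\<dots> = x0 (a' z)" by (simp add: y_def a'_def gig)
      finally show ?thesis by (simp add: x0_def)
    qed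
    have "s c = c" using commute_fix[OF sa' s(1) M(1) com] c2 by (simp add: c_def)
    hence "s = id" using s_id_from_fix[OF s(1) cU three two M(1) M(2) M(3) pr assms(8)] c4 by (simp add: c_def)
    thus "a \<in> G2_set" using s(2) by (simp add: G2_set_semi)
  qed
qed

end
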